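(* Let $k$ be a field and let $A$ be a graded Artinian $k$-algebra with a strong Lefschetz element $\ell\in A_1$. Then for every integer $j>0$, the algebra $A/[0:(\ell^j)]$ has the strong Lefschetz property, with (the image of) $\ell$ as a strong Lefschetz element.
   Context: A graded Artinian $k$-algebra $A$ has the strong Lefschetz property (SLP) if there exists $\ell\in A_1$ such that for all integers $i$ and $j\ge 0$ the multiplication map $\cdot\ell^j\colon A_i\to A_{i+j}$ has maximal rank (is injective or surjective); such $\ell$ is called a strong Lefschetz element. Here $0:(\ell^j)=\{a\in A\mid a\ell^j=0\}$. *)

theory Defs
  imports "HOL-Algebra.Algebra"
begin

definition graded_artinian_algebra ::
  "('a, 'b) ring_scheme \<Rightarrow> 'a set \<Rightarrow> (nat \<Rightarrow> 'a set) \<Rightarrow> bool" where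
  "graded_artinian_algebra R K G \<longleftrightarrow>
     cring R \<and> subfield K R \<and> ring.finite_dimension R K (carrier R) \<and>
     (\<forall>i. subalgebra K (G i) R) \<and>
     (\<forall>i j. \<forall>a\<in>G i. \<forall>b\<in>G j. a \<otimes>\<^bsub>R\<^esub> b \<in> G (i + j)) \<and>
     G 0 = K \<and>
     (\<forall>a\<in>carrier R. \<exists>!f. (\<forall>i. f i \<in> G i) \<and> finite {i. f i \<noteq> \<zero>\<^bsub>R\<^esub>} \<and>
                            a = finsum R f {i. f i \<noteq> \<zero>\<^bsub>R\<^esub>})"

definition strong_lefschetz_element ::
  "('a, 'b) ring_scheme \<Rightarrow> (nat \<Rightarrow> 'a set) \<Rightarrow> 'a \<Rightarrow> bool" where
  "strong_lefschetz_element R G l \<longleftrightarrow>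
     l \<in> G 1 \<and>
     (\<forall>i j. inj_on (\<lambda>a. a \<otimes>\<^bsub>R\<^esub> (l [^]\<^bsub>R\<^esub> (j::nat))) (G i) \<or>
            (\<lambda>a. a \<otimes>\<^bsub>R\<^esub> (l [^]\<^bsub>R\<^esub> (j::nat))) ` G i = G (i + j))"

definition annihilator :: "('a, 'b) ring_scheme \<Rightarrow> 'a \<Rightarrow> 'a set" where
  "annihilator R x = {a \<in> carrier R. a \<otimes>\<^bsub>R\<^esub> x = \<zero>\<^bsub>R\<^esub>}"

end

theory Submission
  imports Defs
begin

locale GA = cring R for R (structure) and K and G +
  assumes GA: "graded_artinian_algebra R K G"
begin

lemma subalg: "subalgebra K (G i) R"
  using GA unfolding graded_artinian_algebra_def by blast

lemma subK: "subfield K R"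
  using GA unfolding graded_artinian_algebra_def by blast

lemma G0: "G 0 = K"
  using GA unfolding graded_artinian_algebra_def by blast

lemma Gmul: "a \<in> G i \<Longrightarrow> b \<in> G k \<Longrightarrow> a \<otimes> b \<in> G (i + k)"
  using GA unfolding graded_artinian_algebra_def by blast

lemma decomp: "a \<in> carrier R \<Longrightarrow> \<exists>!f. (\<forall>i. f i \<in> G i) \<and> finite {i. f i \<noteq> \<zero>} \<and>
                            a = finsum R f {i. f i \<noteq> \<zero>}"
  using GA unfolding graded_artinian_algebra_def by blast

lemma findim: "finite_dimension K (carrier R)"
  using GA unfolding graded_artinian_algebra_def by blast

lemma Gcarr: "G i \<subseteq> carrier R"
  using subalgebra_in_carrier[OF subalg] .

lemma Gsubgroup: "subgroup (G i) (add_monoid R)"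
  using subalg subalgebra_def by blast

lemma Gzero: "\<zero> \<in> G i"
  using subgroup.one_closed[OF Gsubgroup] by simp

lemma Gadd: "a \<in> G i \<Longrightarrow> b \<in> G i \<Longrightarrow> a \<oplus> b \<in> G i"
  using subgroup.m_closed[OF Gsubgroup] by simp

lemma Gneg: "a \<in> G i \<Longrightarrow> \<ominus> a \<in> G i"
  using subgroup.m_inv_closed[OF Gsubgroup] Gcarr by (simp add: a_inv_def)

lemma Gminus: "a \<in> G i \<Longrightarrow> b \<in> G i \<Longrightarrow> a \<ominus> b \<in> G i"
  using Gadd Gneg by (simp add: minus_eq)

lemma Gone: "\<one> \<in> G 0"
  using G0 subfieldE(1)[OF subK] subringE(3) by blast

lemma core_unique:
  assumes S: "finite S" and c: "\<And>i. i \<in> S \<Longrightarrow> c i \<in> G i" and d: "\<And>i. i \<in> S \<Longrightarrow> d i \<in> G i"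
    and eq: "finsum R c S = finsum R d S"
  shows "\<And>i. i \<in> S \<Longrightarrow> c i = d i"
proof -
  define fc where "fc = (\<lambda>i. if i \<in> S then c i else \<zero>)"
  define fd where "fd = (\<lambda>i. if i \<in> S then d i else \<zero>)"
  have fcG: "\<forall>i. fc i \<in> G i" using c Gzero by (simp add: fc_def)
  have fdG: "\<forall>i. fd i \<in> G i" using d Gzero by (simp add: fd_def)
  have fcS: "{i. fc i \<noteq> \<zero>} \<subseteq> S" by (auto simp: fc_def split: if_splits)
  have fdS: "{i. fd i \<noteq> \<zero>} \<subseteq> S" by (auto simp: fd_def split: if_splits)
  have fcfin: "finite {i. fc i \<noteq> \<zero>}" using fcS S finite_subset by blast
  have fdfin: "finite {i. fd i \<noteq> \<zero>}" using fdS S finite_subset by blast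
  have "finsum R fc {i. fc i \<noteq> \<zero>} = finsum R fc S"
    by (rule add.finprod_mono_neutral_cong_left[OF S fcS]) (use fcG Gcarr in auto)
  also have "\<dots> = finsum R c S"
    by (rule finsum_cong') (use c Gcarr in \<open>auto simp: fc_def\<close>)
  finally have e1: "finsum R fc {i. fc i \<noteq> \<zero>} = finsum R c S" .
  have "finsum R fd {i. fd i \<noteq> \<zero>} = finsum R fd S"
    by (rule add.finprod_mono_neutral_cong_left[OF S fdS]) (use fdG Gcarr in auto)
  also have "\<dots> = finsum R d S"
    by (rule finsum_cong') (use d Gcarr in \<open>auto simp: fd_def\<close>)
  finally have e2: "finsum R fd {i. fd i \<noteq> \<zero>} = finsum R d S" .
  have acarr: "finsum R c S \<in> carrier R"
    by (rule finsum_closed) (use c Gcarr in auto)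
  from decomp[OF acarr] have "fc = fd"
    using fcG fdG fcfin fdfin e1 e2 eq by metis
  thus "\<And>i. i \<in> S \<Longrightarrow> c i = d i" by (metis fc_def fd_def)
qed

lemma shift_unique:
  assumes S: "finite S" and c: "\<And>i. i \<in> S \<Longrightarrow> c i \<in> G (i + m)" and d: "\<And>i. i \<in> S \<Longrightarrow> d i \<in> G (i + m)"
    and eq: "finsum R c S = finsum R d S"
  shows "\<And>i. i \<in> S \<Longrightarrow> c i = d i"
proof -
  let ?S = "(\<lambda>i. i + m) ` S"
  have inj: "inj_on (\<lambda>i. i + m) S" by (simp add: inj_on_def)
  have cc: "c i \<in> carrier R" if "i \<in> S" for i using c[OF that] Gcarr[of "i+m"] by blast
  have dc: "d i \<in> carrier R" if "i \<in> S" for i using d[OF that] Gcarr[of "i+m"] by blast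
  have "finsum R (\<lambda>k. c (k - m)) ?S = finsum R (\<lambda>i. c (i + m - m)) S"
    by (rule finsum_reindex) (use inj cc in auto)
  also have "\<dots> = finsum R c S" by simp
  also have "\<dots> = finsum R d S" by (rule eq)
  also have "\<dots> = finsum R (\<lambda>i. d (i + m - m)) S" by simp
  also have "\<dots> = finsum R (\<lambda>k. d (k - m)) ?S"
    by (rule finsum_reindex[symmetric]) (use inj dc in auto)
  finally have E: "finsum R (\<lambda>k. c (k - m)) ?S = finsum R (\<lambda>k. d (k - m)) ?S" .
  have "\<And>k. k \<in> ?S \<Longrightarrow> c (k - m) = d (k - m)"
    by (rule core_unique[OF _ _ _ E]) (use S c d in auto)
  thus "\<And>i. i \<in> S \<Longrightarrow> c i = d i" by force
qed

end


locale GAL = GA +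
  fixes l and j :: nat
  assumes SL: "strong_lefschetz_element R G l"
begin

definition "L = l [^] j"
definition "I = annihilator R L"

lemma lG: "l \<in> G 1" using SL unfolding strong_lefschetz_element_def by blast
lemma lc: "l \<in> carrier R" using lG Gcarr by blast

lemma lpowG: "l [^] (k::nat) \<in> G k"
proof (induction k)
  case 0 then show ?case using Gone by simp
next
  case (Suc k)
  have "l [^] Suc k = l [^] k \<otimes> l" by simp
  moreover have "l [^] k \<otimes> l \<in> G (k + 1)" by (rule Gmul[OF Suc lG])
  ultimately show ?case by simp
qed

lemma Lc: "L \<in> carrier R" unfolding L_def using lc by simp

lemma sub_eq: "a \<in> carrier R \<Longrightarrow> b \<in> carrier R \<Longrightarrow> a \<ominus> b = \<zero> \<Longrightarrow> a = b"
proof -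
  assume a: "a \<in> carrier R" and b: "b \<in> carrier R" and e: "a \<ominus> b = \<zero>"
  have "a = (a \<ominus> b) \<oplus> b" using a b by algebra
  thus "a = b" using e b by simp
qed

lemma I_ideal: "ideal I R"
proof (rule idealI)
  show "ring R" by (rule ring_axioms)
  show "subgroup I (add_monoid R)"
  proof (rule add.subgroupI)
    show "I \<subseteq> carrier R" unfolding I_def annihilator_def by auto
    show "I \<noteq> {}" unfolding I_def annihilator_def using Lc by auto
    fix a b assume a: "a \<in> I" and b: "b \<in> I"
    then have ac: "a \<in> carrier R" and bc: "b \<in> carrier R" and a0: "a \<otimes> L = \<zero>" and b0: "b \<otimes> L = \<zero>"
      unfolding I_def annihilator_def by auto
    have "(\<ominus> a) \<otimes> L = \<ominus> (a \<otimes> L)" using ac Lc by algebra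
    then show "\<ominus> a \<in> I" unfolding I_def annihilator_def
      using ac a0 by simp
    have "(a \<oplus> b) \<otimes> L = a \<otimes> L \<oplus> b \<otimes> L" using ac bc Lc by algebra
    then show "a \<oplus> b \<in> I" unfolding I_def annihilator_def
      using ac bc a0 b0 by simp
  qed
next
  fix a x assume a: "a \<in> I" and x: "x \<in> carrier R"
  then have ac: "a \<in> carrier R" and a0: "a \<otimes> L = \<zero>" unfolding I_def annihilator_def by auto
  have "(x \<otimes> a) \<otimes> L = x \<otimes> (a \<otimes> L)" using ac x Lc by algebra
  then show "x \<otimes> a \<in> I" using a0 x ac unfolding I_def annihilator_def by simp
  have "(a \<otimes> x) \<otimes> L = x \<otimes> (a \<otimes> L)" using ac x Lc by algebra
  then show "a \<otimes> x \<in> I" using a0 x ac unfolding I_def annihilator_def by simp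
qed

lemma coset_eq:
  assumes x: "x \<in> carrier R" and y: "y \<in> carrier R"
  shows "(I +> x = I +> y) \<longleftrightarrow> x \<otimes> L = y \<otimes> L"
proof -
  interpret ideal I R by (rule I_ideal)
  have "(x \<in> I +> y) = (x \<ominus> y \<in> I)" by (rule a_rcos_module_minus[OF ring_axioms y x])
  also have "\<dots> = ((x \<ominus> y) \<otimes> L = \<zero>)" using x y unfolding I_def annihilator_def by auto
  also have "(x \<ominus> y) \<otimes> L = x \<otimes> L \<ominus> y \<otimes> L" using x y Lc by algebra
  also have "(x \<otimes> L \<ominus> y \<otimes> L = \<zero>) = (x \<otimes> L = y \<otimes> L)"
    using sub_eq[of "x \<otimes> L" "y \<otimes> L"] x y Lc by auto
  finally have E: "(x \<in> I +> y) = (x \<otimes> L = y \<otimes> L)" .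
  show ?thesis
  proof
    assume "I +> x = I +> y"
    then have "x \<in> I +> y" using a_rcos_self[OF x] by simp
    then show "x \<otimes> L = y \<otimes> L" using E by simp
  next
    assume "x \<otimes> L = y \<otimes> L"
    then have "x \<in> I +> y" using E by simp
    then show "I +> x = I +> y" using a_repr_independence'[OF _ y] by simp
  qed
qed


lemma hom_Q: "ring_hom_ring R (R Quot I) (a_r_coset R I)"
  using ideal.rcos_ring_hom_ring[OF I_ideal] .

lemma SLP_Q: "strong_lefschetz_element (R Quot I) (\<lambda>i. a_r_coset R I ` G i) (a_r_coset R I l)"
proof -
  interpret H: ring_hom_ring R "R Quot I" "a_r_coset R I" by (rule hom_Q)
  let ?h = "a_r_coset R I"
  have pw: "?h l [^]\<^bsub>R Quot I\<^esub> (k::nat) = ?h (l [^] k)" for k using H.hom_nat_pow lc by simp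
  have mul: "a \<in> carrier R \<Longrightarrow> ?h a \<otimes>\<^bsub>R Quot I\<^esub> ?h (l [^] (k::nat)) = ?h (a \<otimes> l [^] k)" for a k
    using lc by simp
  have Lk: "(a \<otimes> l [^] k) \<otimes> L = a \<otimes> l [^] (k + j)" if "a \<in> carrier R" for a and k :: nat
    using that lc by (simp add: L_def m_assoc nat_pow_mult)
  show ?thesis unfolding strong_lefschetz_element_def
  proof (intro conjI allI)
    show "?h l \<in> ?h ` G 1" using lG by blast
    fix i k :: nat
    from SL have "inj_on (\<lambda>a. a \<otimes> l [^] (k + j)) (G i) \<or> (\<lambda>a. a \<otimes> l [^] (k + j)) ` G i = G (i + (k + j))"
      unfolding strong_lefschetz_element_def by blast
    then show "inj_on (\<lambda>u. u \<otimes>\<^bsub>R Quot I\<^esub> ?h l [^]\<^bsub>R Quot I\<^esub> k) (?h ` G i) \<or>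
       (\<lambda>u. u \<otimes>\<^bsub>R Quot I\<^esub> ?h l [^]\<^bsub>R Quot I\<^esub> k) ` (?h ` G i) = ?h ` G (i + k)"
    proof
      assume inj: "inj_on (\<lambda>a. a \<otimes> l [^] (k + j)) (G i)"
      have "inj_on (\<lambda>u. u \<otimes>\<^bsub>R Quot I\<^esub> ?h l [^]\<^bsub>R Quot I\<^esub> k) (?h ` G i)"
      proof (rule inj_onI)
        fix x1 y1 assume x1: "x1 \<in> ?h ` G i" and y1: "y1 \<in> ?h ` G i"
          and e: "x1 \<otimes>\<^bsub>R Quot I\<^esub> ?h l [^]\<^bsub>R Quot I\<^esub> k = y1 \<otimes>\<^bsub>R Quot I\<^esub> ?h l [^]\<^bsub>R Quot I\<^esub> k"
        from x1 obtain a where a: "a \<in> G i" "x1 = ?h a" by blast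
        from y1 obtain b where b: "b \<in> G i" "y1 = ?h b" by blast
        have ac: "a \<in> carrier R" and bc: "b \<in> carrier R" using a b Gcarr by blast+
        from e have "?h (a \<otimes> l [^] k) = ?h (b \<otimes> l [^] k)" using a b ac bc by (simp only: pw mul)
        then have "(a \<otimes> l [^] k) \<otimes> L = (b \<otimes> l [^] k) \<otimes> L"
          using coset_eq[of "a \<otimes> l [^] k" "b \<otimes> l [^] k"] ac bc lc by simp
        then have "a \<otimes> l [^] (k + j) = b \<otimes> l [^] (k + j)" using Lk ac bc by simp
        then have "a = b" using inj_onD[OF inj _ a(1) b(1)] by simp
        then show "x1 = y1" using a b by simp
      qed
      then show ?thesis by blast
    next
      assume surj: "(\<lambda>a. a \<otimes> l [^] (k + j)) ` G i = G (i + (k + j))"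
      have "(\<lambda>u. u \<otimes>\<^bsub>R Quot I\<^esub> ?h l [^]\<^bsub>R Quot I\<^esub> k) ` (?h ` G i) = ?h ` G (i + k)"
      proof
        show "(\<lambda>u. u \<otimes>\<^bsub>R Quot I\<^esub> ?h l [^]\<^bsub>R Quot I\<^esub> k) ` (?h ` G i) \<subseteq> ?h ` G (i + k)"
        proof
          fix z1 assume "z1 \<in> (\<lambda>u. u \<otimes>\<^bsub>R Quot I\<^esub> ?h l [^]\<^bsub>R Quot I\<^esub> k) ` (?h ` G i)"
          then obtain a where a: "a \<in> G i" "z1 = ?h a \<otimes>\<^bsub>R Quot I\<^esub> ?h l [^]\<^bsub>R Quot I\<^esub> k" by blast
          have ac: "a \<in> carrier R" using a Gcarr by blast
          have "z1 = ?h (a \<otimes> l [^] k)" using a ac by (simp only: pw mul)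
          moreover have "a \<otimes> l [^] k \<in> G (i + k)" using Gmul[OF a(1) lpowG] .
          ultimately show "z1 \<in> ?h ` G (i + k)" by blast
        qed
        show "?h ` G (i + k) \<subseteq> (\<lambda>u. u \<otimes>\<^bsub>R Quot I\<^esub> ?h l [^]\<^bsub>R Quot I\<^esub> k) ` (?h ` G i)"
        proof
          fix y1 assume "y1 \<in> ?h ` G (i + k)"
          then obtain c where c: "c \<in> G (i + k)" "y1 = ?h c" by blast
          have cc: "c \<in> carrier R" using c Gcarr by blast
          have "c \<otimes> L \<in> G (i + k + j)" unfolding L_def using Gmul[OF c(1) lpowG] .
          then have "c \<otimes> L \<in> (\<lambda>a. a \<otimes> l [^] (k + j)) ` G i" using surj by (simp add: add.assoc)
          then obtain a where a: "a \<in> G i" "c \<otimes> L = a \<otimes> l [^] (k + j)" by blast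
          have ac: "a \<in> carrier R" using a Gcarr by blast
          have "c \<otimes> L = (a \<otimes> l [^] k) \<otimes> L" using a Lk ac by simp
          then have "?h c = ?h (a \<otimes> l [^] k)" using coset_eq[of c "a \<otimes> l [^] k"] cc ac lc by simp
          also have "\<dots> = ?h a \<otimes>\<^bsub>R Quot I\<^esub> ?h l [^]\<^bsub>R Quot I\<^esub> k" using ac by (simp only: pw mul)
          finally show "y1 \<in> (\<lambda>u. u \<otimes>\<^bsub>R Quot I\<^esub> ?h l [^]\<^bsub>R Quot I\<^esub> k) ` (?h ` G i)"
            using c a by blast
        qed
      qed
      then show ?thesis by blast
    qed
  qed
qed


lemma carrier_Q: "carrier (R Quot I) = a_r_coset R I ` carrier R"
  by (auto simp: FactRing_def A_RCOSETS_def')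

lemma rep:
  assumes g: "\<And>i. g i \<in> a_r_coset R I ` G i"
  shows "\<exists>r. \<forall>i. r i \<in> G i \<and> a_r_coset R I (r i) = g i \<and> (g i = \<zero>\<^bsub>R Quot I\<^esub> \<longrightarrow> r i = \<zero>)"
proof -
  interpret H: ring_hom_ring R "R Quot I" "a_r_coset R I" by (rule hom_Q)
  define r where "r = (\<lambda>i. if g i = \<zero>\<^bsub>R Quot I\<^esub> then \<zero> else SOME a. a \<in> G i \<and> a_r_coset R I a = g i)"
  have "r i \<in> G i \<and> a_r_coset R I (r i) = g i \<and> (g i = \<zero>\<^bsub>R Quot I\<^esub> \<longrightarrow> r i = \<zero>)" for i
  proof (cases "g i = \<zero>\<^bsub>R Quot I\<^esub>")
    case True then show ?thesis using Gzero H.hom_zero by (simp add: r_def)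
  next
    case False
    have "\<exists>a. a \<in> G i \<and> a_r_coset R I a = g i" using g[of i] by blast
    from someI_ex[OF this] show ?thesis using False by (simp add: r_def)
  qed
  then show ?thesis by blast
qed

lemma GA_Q:
  assumes L0: "L \<noteq> \<zero>"
  shows "graded_artinian_algebra (R Quot I) (a_r_coset R I ` K) (\<lambda>i. a_r_coset R I ` G i)"
proof -
  interpret Q: cring "R Quot I" by (rule ideal.quotient_is_cring[OF I_ideal is_cring])
  interpret H: ring_hom_ring R "R Quot I" "a_r_coset R I" by (rule hom_Q)
  let ?h = "a_r_coset R I"
  have Kc: "K \<subseteq> carrier R" using subfieldE(3)[OF subK] .
  have one_ne: "\<one>\<^bsub>R Quot I\<^esub> \<noteq> \<zero>\<^bsub>R Quot I\<^esub>"
  proof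
    assume "\<one>\<^bsub>R Quot I\<^esub> = \<zero>\<^bsub>R Quot I\<^esub>"
    then have "?h \<one> = ?h \<zero>" using H.hom_one H.hom_zero by simp
    then have "\<one> \<otimes> L = \<zero> \<otimes> L" using coset_eq[of "\<one>" "\<zero>"] by simp
    then show False using L0 Lc by simp
  qed
  have subQ: "subfield (?h ` K) (R Quot I)" using H.img_is_subfield(2)[OF subK one_ne] .
  have fd: "ring.finite_dimension (R Quot I) (?h ` K) (carrier (R Quot I))"
  proof -
    obtain n where n: "dimension n K (carrier R)" using findim by (rule finite_dimensionE')
    obtain Vs where Vs: "set Vs \<subseteq> carrier R" "Span K Vs = carrier R"
      using exists_base[OF subK n] by blast
    have "ring.Span (R Quot I) (?h ` K) (map ?h Vs) = ?h ` Span K Vs" using H.Span_hom[OF Kc Vs(1)] .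
    also have "\<dots> = carrier (R Quot I)" using Vs(2) carrier_Q by simp
    finally have E: "ring.Span (R Quot I) (?h ` K) (map ?h Vs) = carrier (R Quot I)" .
    have "set (map ?h Vs) \<subseteq> carrier (R Quot I)" using Vs(1) carrier_Q by auto
    from ring.Span_finite_dimension[OF Q.ring_axioms subQ this] show ?thesis using E by simp
  qed
  have hGc: "?h ` G i \<subseteq> carrier (R Quot I)" for i using Gcarr carrier_Q by blast
  have exist: "\<exists>g. (\<forall>i. g i \<in> ?h ` G i) \<and> finite {i. g i \<noteq> \<zero>\<^bsub>R Quot I\<^esub>} \<and>
                   x = finsum (R Quot I) g {i. g i \<noteq> \<zero>\<^bsub>R Quot I\<^esub>}" if x: "x \<in> carrier (R Quot I)" for x
  proof -
    obtain a where a: "a \<in> carrier R" "x = ?h a" using x carrier_Q by blast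
    obtain f where f: "\<forall>i. f i \<in> G i" "finite {i. f i \<noteq> \<zero>}" "a = finsum R f {i. f i \<noteq> \<zero>}"
      using decomp[OF a(1)] by blast
    define g where "g = (\<lambda>i. ?h (f i))"
    have gG: "\<forall>i. g i \<in> ?h ` G i" using f(1) by (simp add: g_def)
    have sub: "{i. g i \<noteq> \<zero>\<^bsub>R Quot I\<^esub>} \<subseteq> {i. f i \<noteq> \<zero>}" using H.hom_zero by (auto simp: g_def)
    have fin: "finite {i. g i \<noteq> \<zero>\<^bsub>R Quot I\<^esub>}" using finite_subset[OF sub f(2)] .
    have gc: "g i \<in> carrier (R Quot I)" for i using gG hGc by blast
    have fc: "f \<in> {i. f i \<noteq> \<zero>} \<rightarrow> carrier R" using f(1) Gcarr by blast
    have "finsum (R Quot I) g {i. g i \<noteq> \<zero>\<^bsub>R Quot I\<^esub>} = finsum (R Quot I) g {i. f i \<noteq> \<zero>}"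
      by (rule Q.add.finprod_mono_neutral_cong_left[OF f(2) sub]) (use gc in auto)
    also have "\<dots> = ?h (finsum R f {i. f i \<noteq> \<zero>})" using H.hom_finsum[OF fc] by (simp add: g_def comp_def)
    also have "\<dots> = x" using a f(3) by simp
    finally show ?thesis using gG fin by metis
  qed
  have uniq: "g1 = g2" if
    g1: "\<forall>i. g1 i \<in> ?h ` G i" "finite {i. g1 i \<noteq> \<zero>\<^bsub>R Quot I\<^esub>}"
        "x = finsum (R Quot I) g1 {i. g1 i \<noteq> \<zero>\<^bsub>R Quot I\<^esub>}" and
    g2: "\<forall>i. g2 i \<in> ?h ` G i" "finite {i. g2 i \<noteq> \<zero>\<^bsub>R Quot I\<^esub>}"
        "x = finsum (R Quot I) g2 {i. g2 i \<noteq> \<zero>\<^bsub>R Quot I\<^esub>}" for x g1 g2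
  proof -
    obtain r1 where r1: "\<forall>i. r1 i \<in> G i \<and> ?h (r1 i) = g1 i \<and> (g1 i = \<zero>\<^bsub>R Quot I\<^esub> \<longrightarrow> r1 i = \<zero>)"
      using rep g1(1) by blast
    obtain r2 where r2: "\<forall>i. r2 i \<in> G i \<and> ?h (r2 i) = g2 i \<and> (g2 i = \<zero>\<^bsub>R Quot I\<^esub> \<longrightarrow> r2 i = \<zero>)"
      using rep g2(1) by blast
    define S where "S = {i. g1 i \<noteq> \<zero>\<^bsub>R Quot I\<^esub>} \<union> {i. g2 i \<noteq> \<zero>\<^bsub>R Quot I\<^esub>}"
    have S: "finite S" using g1(2) g2(2) by (simp add: S_def)
    have g1c: "g1 i \<in> carrier (R Quot I)" for i using g1(1) hGc by blast
    have g2c: "g2 i \<in> carrier (R Quot I)" for i using g2(1) hGc by blast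
    have r1c: "r1 \<in> S \<rightarrow> carrier R" using r1 Gcarr by blast
    have r2c: "r2 \<in> S \<rightarrow> carrier R" using r2 Gcarr by blast
    have "x = finsum (R Quot I) g1 S" unfolding g1(3)
      by (rule Q.add.finprod_mono_neutral_cong_left) (use S g1c in \<open>auto simp: S_def\<close>)
    also have "\<dots> = finsum (R Quot I) (?h \<circ> r1) S"
      by (rule Q.add.finprod_cong') (use r1 g1c in auto)
    also have "\<dots> = ?h (finsum R r1 S)" using H.hom_finsum[OF r1c] by simp
    finally have x1: "x = ?h (finsum R r1 S)" .
    have "x = finsum (R Quot I) g2 S" unfolding g2(3)
      by (rule Q.add.finprod_mono_neutral_cong_left) (use S g2c in \<open>auto simp: S_def\<close>)
    also have "\<dots> = finsum (R Quot I) (?h \<circ> r2) S"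
      by (rule Q.add.finprod_cong') (use r2 g2c in auto)
    also have "\<dots> = ?h (finsum R r2 S)" using H.hom_finsum[OF r2c] by simp
    finally have x2: "x = ?h (finsum R r2 S)" .
    have s1c: "finsum R r1 S \<in> carrier R" using finsum_closed[OF r1c] .
    have s2c: "finsum R r2 S \<in> carrier R" using finsum_closed[OF r2c] .
    have "finsum R r1 S \<otimes> L = finsum R r2 S \<otimes> L"
      using coset_eq[OF s1c s2c] x1 x2 by simp
    then have E: "finsum R (\<lambda>i. r1 i \<otimes> L) S = finsum R (\<lambda>i. r2 i \<otimes> L) S"
      using finsum_ldistr[OF S Lc r1c] finsum_ldistr[OF S Lc r2c] by simp
    have m1: "r1 i \<otimes> L \<in> G (i + j)" for i unfolding L_def using Gmul[OF _ lpowG] r1 by blast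
    have m2: "r2 i \<otimes> L \<in> G (i + j)" for i unfolding L_def using Gmul[OF _ lpowG] r2 by blast
    have "\<And>i. i \<in> S \<Longrightarrow> r1 i \<otimes> L = r2 i \<otimes> L"
      by (rule shift_unique[OF S _ _ E, where m = j]) (rule m1, rule m2)
    have rc1: "r1 i \<in> carrier R" for i using r1 Gcarr[of i] by blast
    have rc2: "r2 i \<in> carrier R" for i using r2 Gcarr[of i] by blast
    have "?h (r1 i) = ?h (r2 i)" if "i \<in> S" for i
      using coset_eq[OF rc1[of i] rc2[of i]] \<open>\<And>i. i \<in> S \<Longrightarrow> r1 i \<otimes> L = r2 i \<otimes> L\<close>[OF that] by simp
    moreover have "?h (r1 i) = g1 i" "?h (r2 i) = g2 i" for i using r1 r2 by simp_all
    ultimately have "g1 i = g2 i" if "i \<in> S" for i using that by simp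
    moreover have "g1 i = g2 i" if "i \<notin> S" for i using that by (simp add: S_def)
    ultimately show "g1 = g2" by blast
  qed
  show ?thesis unfolding graded_artinian_algebra_def
  proof (intro conjI allI ballI)
    show "cring (R Quot I)" by (rule Q.is_cring)
    show "subfield (?h ` K) (R Quot I)" by (rule subQ)
    show "ring.finite_dimension (R Quot I) (?h ` K) (carrier (R Quot I))" by (rule fd)
    show "subalgebra (?h ` K) (?h ` G i) (R Quot I)" for i using H.img_is_subalgebra[OF Kc subalg] .
    show "?h ` G 0 = ?h ` K" using G0 by simp
    fix i k a b assume a: "a \<in> ?h ` G i" and b: "b \<in> ?h ` G k"
    then obtain a' b' where "a' \<in> G i" "a = ?h a'" "b' \<in> G k" "b = ?h b'" by blast
    moreover have "a' \<in> carrier R" "b' \<in> carrier R" using calculation Gcarr by blast+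
    ultimately have "a \<otimes>\<^bsub>R Quot I\<^esub> b = ?h (a' \<otimes> b')" "a' \<otimes> b' \<in> G (i + k)"
      using Gmul by auto
    then show "a \<otimes>\<^bsub>R Quot I\<^esub> b \<in> ?h ` G (i + k)" by blast
  next
    fix x assume "x \<in> carrier (R Quot I)"
    show "\<exists>!g. (\<forall>i. g i \<in> ?h ` G i) \<and> finite {i. g i \<noteq> \<zero>\<^bsub>R Quot I\<^esub>} \<and>
                   x = finsum (R Quot I) g {i. g i \<noteq> \<zero>\<^bsub>R Quot I\<^esub>}"
    proof (rule ex_ex1I)
      show "\<exists>g. (\<forall>i. g i \<in> ?h ` G i) \<and> finite {i. g i \<noteq> \<zero>\<^bsub>R Quot I\<^esub>} \<and>
                   x = finsum (R Quot I) g {i. g i \<noteq> \<zero>\<^bsub>R Quot I\<^esub>}"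
        by (rule exist[OF \<open>x \<in> carrier (R Quot I)\<close>])
    next
      fix g y assume A: "(\<forall>i. g i \<in> ?h ` G i) \<and> finite {i. g i \<noteq> \<zero>\<^bsub>R Quot I\<^esub>} \<and>
                   x = finsum (R Quot I) g {i. g i \<noteq> \<zero>\<^bsub>R Quot I\<^esub>}"
        and B: "(\<forall>i. y i \<in> ?h ` G i) \<and> finite {i. y i \<noteq> \<zero>\<^bsub>R Quot I\<^esub>} \<and>
                   x = finsum (R Quot I) y {i. y i \<noteq> \<zero>\<^bsub>R Quot I\<^esub>}"
      show "g = y" using uniq[of g x y] A B by blast
    qed
  qed
qed

end

theorem mainTheorem4:
  fixes R :: "('a, 'b) ring_scheme" and K :: "'a set" and G :: "nat \<Rightarrow> 'a set"
    and l :: 'a and j :: nat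
  assumes "graded_artinian_algebra R K G"
    and "strong_lefschetz_element R G l"
    and "j > 0"
  shows "strong_lefschetz_element (R Quot annihilator R (l [^]\<^bsub>R\<^esub> j))
           (\<lambda>i. a_r_coset R (annihilator R (l [^]\<^bsub>R\<^esub> j)) ` G i)
           (a_r_coset R (annihilator R (l [^]\<^bsub>R\<^esub> j)) l)
       \<and> (l [^]\<^bsub>R\<^esub> j \<noteq> \<zero>\<^bsub>R\<^esub> \<longrightarrow>
           graded_artinian_algebra (R Quot annihilator R (l [^]\<^bsub>R\<^esub> j))
             (a_r_coset R (annihilator R (l [^]\<^bsub>R\<^esub> j)) ` K)
             (\<lambda>i. a_r_coset R (annihilator R (l [^]\<^bsub>R\<^esub> j)) ` G i))"
proof -
  have cr: "cring R" using assms(1) unfolding graded_artinian_algebra_def by blast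
  interpret GAL R K G l j
    by (rule GAL.intro[OF GA.intro[OF cr] GAL_axioms.intro]) (use assms in \<open>auto simp: GA_axioms_def\<close>)
  have II: "annihilator R (l [^]\<^bsub>R\<^esub> j) = I" by (simp add: I_def L_def)
  show ?thesis unfolding II using SLP_Q GA_Q by (simp add: L_def)
qed

end
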